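(* Let $(X,\rho)$ be a complete metric space, $D\subset X$ a closed subset, and $f:D\to\mathbb{R}$ a lower semicontinuous function. Define the set-valued map $L_f:\mathbb{R}\rightrightarrows D$ by $L_f(r)=[f\le r]\cup\partial D$, where $[f\le r]=\{x\in D: f(x)\le r\}$. Then $L_f$ is outer semicontinuous. Moreover, for $\bar r\in f(D)$, $L_f$ is continuous at $\bar r$ if and only if there is no $x\in\operatorname{int}(D)$ such that $f(x)=\bar r$ and $x$ is a local minimizer of $f$.
   Context: For a sequence of sets $C_\nu$ in a metric space, the outer limit $\limsup_\nu C_\nu$ is the set of all cluster points of sequences $x_\nu\in C_\nu$, and the inner limit $\liminf_\nu C_\nu$ is the set of all limits of sequences $x_\nu\in C_\nu$ (for $\nu$ large). For a set-valued map $S$, $\limsup_{x\to\bar x}S(x)$ is the union of $\limsup_\nu S(x_\nu)$ over all sequences $x_\nu\to\bar x$, and $\liminf_{x\to\bar x}S(x)$ is the intersection of $\liminf_\nu S(x_\nu)$ over all sequences $x_\nu\to\bar x$. $S$ is outer semicontinuous at $\bar x$ if $\limsup_{x\to\bar x}S(x)\subset S(\bar x)$, inner semicontinuous at $\bar x$ if $\liminf_{x\to\bar x}S(x)\supset S(\bar x)$, and continuous at $\bar x$ if both hold; outer semicontinuous means outer semicontinuous at every point. $\operatorname{int}(D)$ and $\partial D$ denote interior and boundary of $D$ in $X$. *)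

theory Defs
  imports "HOL-Analysis.Analysis"
begin

definition lsc_on :: "'a::metric_space set \<Rightarrow> ('a \<Rightarrow> real) \<Rightarrow> bool" where
  "lsc_on D f \<longleftrightarrow> (\<forall>x\<in>D. \<forall>e>0. \<exists>d>0. \<forall>y\<in>D. dist y x < d \<longrightarrow> f x - e < f y)"

definition seq_outer_limit :: "(nat \<Rightarrow> 'a::metric_space set) \<Rightarrow> 'a set" where
  "seq_outer_limit C = {x. \<exists>\<sigma> y. strict_mono \<sigma> \<and> (\<forall>n. y n \<in> C (\<sigma> n)) \<and> y \<longlonglongrightarrow> x}"

definition seq_inner_limit :: "(nat \<Rightarrow> 'a::metric_space set) \<Rightarrow> 'a set" where
  "seq_inner_limit C = {x. \<exists>y. (\<forall>\<^sub>F n in sequentially. y n \<in> C n) \<and> y \<longlonglongrightarrow> x}"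

definition outer_limit :: "('b::metric_space \<Rightarrow> 'a::metric_space set) \<Rightarrow> 'b \<Rightarrow> 'a set" where
  "outer_limit S xb = (\<Union>r\<in>{r. r \<longlonglongrightarrow> xb}. seq_outer_limit (\<lambda>n. S (r n)))"

definition inner_limit :: "('b::metric_space \<Rightarrow> 'a::metric_space set) \<Rightarrow> 'b \<Rightarrow> 'a set" where
  "inner_limit S xb = (\<Inter>r\<in>{r. r \<longlonglongrightarrow> xb}. seq_inner_limit (\<lambda>n. S (r n)))"

definition osc_at :: "('b::metric_space \<Rightarrow> 'a::metric_space set) \<Rightarrow> 'b \<Rightarrow> bool" where
  "osc_at S xb \<longleftrightarrow> outer_limit S xb \<subseteq> S xb"

definition isc_at :: "('b::metric_space \<Rightarrow> 'a::metric_space set) \<Rightarrow> 'b \<Rightarrow> bool" where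
  "isc_at S xb \<longleftrightarrow> S xb \<subseteq> inner_limit S xb"

definition setval_continuous_at :: "('b::metric_space \<Rightarrow> 'a::metric_space set) \<Rightarrow> 'b \<Rightarrow> bool" where
  "setval_continuous_at S xb \<longleftrightarrow> osc_at S xb \<and> isc_at S xb"

definition osc :: "('b::metric_space \<Rightarrow> 'a::metric_space set) \<Rightarrow> bool" where
  "osc S \<longleftrightarrow> (\<forall>xb. osc_at S xb)"

definition local_minimizer :: "'a::metric_space set \<Rightarrow> ('a \<Rightarrow> real) \<Rightarrow> 'a \<Rightarrow> bool" where
  "local_minimizer D f x \<longleftrightarrow> x \<in> D \<and> (\<exists>e>0. \<forall>y\<in>D. dist y x < e \<longrightarrow> f x \<le> f y)"

end

theory Submission
  imports Defs
begin

theorem mainTheorem1: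
  fixes D :: "'a::complete_space set" and f :: "'a \<Rightarrow> real"
  assumes "closed D" and "lsc_on D f"
  defines "L \<equiv> (\<lambda>r::real. {x\<in>D. f x \<le> r} \<union> frontier D)"
  shows "osc L \<and>
    (\<forall>rb\<in>f ` D. setval_continuous_at L rb \<longleftrightarrow>
        \<not> (\<exists>x\<in>interior D. f x = rb \<and> local_minimizer D f x))"
proof -
  have fr: "frontier D = D - interior D" using assms(1)
    by (simp add: frontier_def closure_closed)
  have oscL: "osc L"
    unfolding osc_def osc_at_def outer_limit_def seq_outer_limit_def
  proof (intro allI subsetI)
    fix rb x
    assume "x \<in> (\<Union>r\<in>{r. r \<longlonglongrightarrow> rb}. {x. \<exists>\<sigma> y. strict_mono \<sigma> \<and> (\<forall>n. y n \<in> L (r (\<sigma> n))) \<and> y \<longlonglongrightarrow> x})"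
    then obtain r \<sigma> y where r: "r \<longlonglongrightarrow> rb" and \<sigma>: "strict_mono \<sigma>"
      and y: "\<forall>n. y n \<in> L (r (\<sigma> n))" and yx: "y \<longlonglongrightarrow> x" by blast
    show "x \<in> L rb"
    proof (rule ccontr)
      assume nx: "x \<notin> L rb"
      hence xf: "x \<notin> frontier D" by (simp add: L_def)
      have "eventually (\<lambda>n. y n \<in> - frontier D) sequentially"
        using yx xf by (intro topological_tendstoD) auto
      then have ev: "eventually (\<lambda>n. y n \<in> D \<and> f (y n) \<le> r (\<sigma> n)) sequentially"
        using y by (auto simp: L_def elim!: eventually_mono)
      have evD: "eventually (\<lambda>n. y n \<in> D) sequentially" using ev by (auto elim: eventually_mono)
      have xD: "x \<in> D"
        using Lim_in_closed_set[OF assms(1) evD _ yx] by simp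
      hence fx: "f x > rb" using nx by (simp add: L_def)
      define e where "e = (f x - rb)/2"
      have e: "e > 0" using fx by (simp add: e_def)
      obtain d where d: "d > 0" and hd: "\<forall>z\<in>D. dist z x < d \<longrightarrow> f x - e < f z"
        using assms(2) xD e unfolding lsc_on_def by blast
      have rs: "(r \<circ> \<sigma>) \<longlonglongrightarrow> rb" using LIMSEQ_subseq_LIMSEQ[OF r \<sigma>] .
      have e1: "eventually (\<lambda>n. dist (y n) x < d) sequentially" using yx d by (simp add: tendsto_iff)
      have e2: "eventually (\<lambda>n. dist ((r \<circ> \<sigma>) n) rb < e) sequentially" using rs e by (simp add: tendsto_iff)
      from eventually_conj[OF ev eventually_conj[OF e1 e2]]
      obtain n where "y n \<in> D \<and> f (y n) \<le> r (\<sigma> n)" "dist (y n) x < d" "dist ((r \<circ> \<sigma>) n) rb < e"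
        unfolding eventually_sequentially by blast
      with hd have "f x - e < f (y n)" "f (y n) \<le> r (\<sigma> n)" "\<bar>r (\<sigma> n) - rb\<bar> < e"
        by (auto simp: dist_real_def)
      then have "f x - e < r (\<sigma> n)" "r (\<sigma> n) < rb + e" by (auto simp: abs_less_iff)
      then show False unfolding e_def by (simp add: field_simps)
    qed
  qed
  have A: "\<not> isc_at L rb" if x: "x \<in> interior D" "f x = rb" "local_minimizer D f x" for x rb
  proof
    assume isc: "isc_at L rb"
    obtain e where e: "e > 0" and he: "\<forall>y\<in>D. dist y x < e \<longrightarrow> f x \<le> f y"
      using x(3) unfolding local_minimizer_def by blast
    obtain e' where e': "e' > 0" "ball x e' \<subseteq> D" using x(1) by (meson mem_interior)
    define r where "r n = rb - inverse (real (Suc n))" for n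
    have r: "r \<longlonglongrightarrow> rb" unfolding r_def
      using tendsto_diff[OF tendsto_const LIMSEQ_inverse_real_of_nat, of rb] by simp
    have "x \<in> L rb" using x interior_subset by (auto simp: L_def)
    with isc r have "x \<in> seq_inner_limit (\<lambda>n. L (r n))"
      unfolding isc_at_def inner_limit_def by blast
    then obtain y where ev: "eventually (\<lambda>n. y n \<in> L (r n)) sequentially" and yx: "y \<longlonglongrightarrow> x"
      unfolding seq_inner_limit_def by blast
    have e1: "eventually (\<lambda>n. dist (y n) x < min e e') sequentially"
      using yx e e' unfolding tendsto_iff by (metis min_less_iff_conj)
    from eventually_conj[OF ev e1] obtain n where
      n: "y n \<in> L (r n)" "dist (y n) x < min e e'"
      unfolding eventually_sequentially by blast
    have "y n \<in> ball x e'" using n(2) by (simp add: dist_commute)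
    hence yi: "y n \<in> interior D" using e'(2) by (meson interiorI open_ball)
    hence "y n \<in> D" "f (y n) \<le> r n" using n(1) fr interior_subset by (auto simp: L_def)
    moreover have "f x \<le> f (y n)" using he n(2) \<open>y n \<in> D\<close> by auto
    moreover have "r n < rb" by (simp add: r_def)
    ultimately show False using x(2) by linarith
  qed
  have B: "isc_at L rb" if nx: "\<not> (\<exists>x\<in>interior D. f x = rb \<and> local_minimizer D f x)" for rb
    unfolding isc_at_def inner_limit_def seq_inner_limit_def
  proof (intro subsetI, simp, intro allI impI)
    fix x r assume xL: "x \<in> L rb" and r: "r \<longlonglongrightarrow> rb"
    show "\<exists>y. (\<forall>\<^sub>F n in sequentially. y n \<in> L (r n)) \<and> y \<longlonglongrightarrow> x"
    proof (cases "x \<in> frontier D")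
      case True
      then show ?thesis by (intro exI[of _ "\<lambda>n. x"]) (auto simp: L_def)
    next
      case False
      then have xD: "x \<in> D" "f x \<le> rb" "x \<in> interior D" using xL fr by (auto simp: L_def)
      show ?thesis
      proof (cases "f x < rb")
        case True
        have "eventually (\<lambda>n. f x < r n) sequentially" using order_tendstoD(1)[OF r True] .
        then show ?thesis using xD
          by (intro exI[of _ "\<lambda>n. x"]) (auto simp: L_def elim!: eventually_mono)
      next
        case False
        hence fx: "f x = rb" using xD by simp
        hence nlm: "\<not> local_minimizer D f x" using nx xD by blast
        have "\<forall>k. \<exists>z. z \<in> D \<and> dist z x < inverse (real (Suc k)) \<and> f z < rb"
        proof
          fix k
          have "inverse (real (Suc k)) > 0" by simp
          then show "\<exists>z. z \<in> D \<and> dist z x < inverse (real (Suc k)) \<and> f z < rb"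
            using nlm xD fx unfolding local_minimizer_def by (meson not_le)
        qed
        then obtain z where z: "\<And>k. z k \<in> D" "\<And>k. dist (z k) x < inverse (real (Suc k))"
          "\<And>k. f (z k) < rb" by metis
        define P where "P n k \<longleftrightarrow> k \<le> n \<and> f (z k) \<le> r n" for n k
        define y where "y n = (if f x \<le> r n then x else if \<exists>k. P n k then z (GREATEST k. P n k) else x)" for n
        have Pb: "\<forall>k. P n k \<longrightarrow> k \<le> n" for n by (simp add: P_def)
        have yD: "y n \<in> D" for n using xD z by (simp add: y_def)
        have "eventually (\<lambda>n. f (z 0) < r n) sequentially" using order_tendstoD(1)[OF r z(3)] .
        hence ev: "eventually (\<lambda>n. y n \<in> L (r n)) sequentially"
        proof (rule eventually_mono)
          fix n assume h: "f (z 0) < r n"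
          have "f (y n) \<le> r n"
          proof (cases "f x \<le> r n")
            case True then show ?thesis by (simp add: y_def)
          next
            case False
            have "P n 0" using h by (simp add: P_def)
            hence ex: "\<exists>k. P n k" by blast
            have "P n (GREATEST k. P n k)" using GreatestI_nat[of "P n" 0 n] \<open>P n 0\<close> Pb[of n] by blast
            then have "f (z (Greatest (P n))) \<le> r n" by (meson P_def)
            then show ?thesis using False ex by (simp add: y_def)
          qed
          then show "y n \<in> L (r n)" using yD by (simp add: L_def)
        qed
        have "y \<longlonglongrightarrow> x" unfolding tendsto_iff
        proof (intro allI impI)
          fix \<epsilon> :: real assume \<epsilon>: "\<epsilon> > 0"
          obtain K where K: "inverse (real (Suc K)) < \<epsilon>" using reals_Archimedean[OF \<epsilon>] by blast
          have "eventually (\<lambda>n. \<forall>k\<in>{..K}. f (z k) < r n) sequentially"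
            using order_tendstoD(1)[OF r z(3)] by (intro eventually_ball_finite) auto
          moreover have "eventually (\<lambda>n. K \<le> n) sequentially" by (simp add: eventually_ge_at_top)
          ultimately show "eventually (\<lambda>n. dist (y n) x < \<epsilon>) sequentially"
          proof (eventually_elim)
            case (elim n)
            show ?case
            proof (cases "f x \<le> r n")
              case True then show ?thesis using \<epsilon> by (simp add: y_def)
            next
              case False
              have PK: "P n K" using elim by (auto simp: P_def less_imp_le)
              hence ex: "\<exists>k. P n k" by blast
              have g: "K \<le> (GREATEST k. P n k)" using Greatest_le_nat[of "P n" K n] PK Pb[of n] by blast
              have "dist (y n) x = dist (z (GREATEST k. P n k)) x" using False ex by (simp add: y_def)
              also have "\<dots> < inverse (real (Suc (GREATEST k. P n k)))" by (rule z(2))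
              also have "\<dots> \<le> inverse (real (Suc K))" using g by (simp add: field_simps)
              finally show ?thesis using K by linarith
            qed
          qed
        qed
        then show ?thesis using ev by blast
      qed
    qed
  qed
  show ?thesis
  proof (intro conjI ballI)
    show "osc L" by (rule oscL)
  next
    fix rb
    have "setval_continuous_at L rb \<longleftrightarrow> isc_at L rb"
      using oscL by (simp add: setval_continuous_at_def osc_def)
    then show "setval_continuous_at L rb \<longleftrightarrow> \<not> (\<exists>x\<in>interior D. f x = rb \<and> local_minimizer D f x)"
      using A B by blast
  qed
qed

end
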